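(* Let $X,Y$ be metrizable vector spaces over $K$ with metrics $d_X,d_Y$. If $d_Y$ is translation invariant and scale bounded on $Y$, then $B_d(X,Y)$ is a vector space under pointwise operations and $d$ is a translation invariant metric on it. Furthermore, if $Y$ is a normed space and $d_Y$ is the metric induced by its norm, then $B_d(X,Y)$ is a normed space with norm $\|F\|_{B_d(X,Y)}=d(F,0)$.
   Context: $K$ is $\mathbb{R}$ or $\mathbb{C}$. For maps $F_1,F_2:X\to Y$, $d(F_1,F_2)=\max\left\{\sup_{x\neq0,x\in X}\frac{d_Y[F_1(x),F_2(x)]}{d_X(x,0)},\ d_Y[F_1(0),F_2(0)]\right\}\in[0,\infty]$, and $B_d(X,Y)$ is the set of maps $F:X\to Y$ with $d(F,0)<\infty$. A translation invariant metric $d_Y$ is scale bounded on $Y$ if for every $\alpha\in K$ there is a positive number $C_\alpha$ with $d_Y(\alpha y,0)\le C_\alpha d_Y(y,0)$ for all $y\in Y$. *)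

theory Defs
  imports "HOL-Analysis.Analysis" "HOL-Library.Function_Algebras"
begin

definition metrizable_vs ::
  "('k::real_normed_field \<Rightarrow> 'a::ab_group_add \<Rightarrow> 'a) \<Rightarrow> ('a \<Rightarrow> 'a \<Rightarrow> real) \<Rightarrow> bool" where
  "metrizable_vs s d \<longleftrightarrow>
     vector_space s \<and> Metric_space UNIV d \<and>
     continuous_map (prod_topology (Metric_space.mtopology UNIV d) (Metric_space.mtopology UNIV d))
                    (Metric_space.mtopology UNIV d) (\<lambda>(x, y). x + y) \<and>
     continuous_map (prod_topology (euclidean :: 'k topology) (Metric_space.mtopology UNIV d))
                    (Metric_space.mtopology UNIV d) (\<lambda>(a, x). s a x)"

definition translation_invariant :: "('a::ab_group_add \<Rightarrow> 'a \<Rightarrow> real) \<Rightarrow> bool" where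
  "translation_invariant d \<longleftrightarrow> (\<forall>u v w. d (u + w) (v + w) = d u v)"

definition scale_bounded ::
  "('k \<Rightarrow> 'a::ab_group_add \<Rightarrow> 'a) \<Rightarrow> ('a \<Rightarrow> 'a \<Rightarrow> real) \<Rightarrow> bool" where
  "scale_bounded s d \<longleftrightarrow> (\<forall>\<alpha>. \<exists>C>0. \<forall>y. d (s \<alpha> y) 0 \<le> C * d y 0)"

definition dmap ::
  "('a::zero \<Rightarrow> 'a \<Rightarrow> real) \<Rightarrow> ('b \<Rightarrow> 'b \<Rightarrow> real) \<Rightarrow> ('a \<Rightarrow> 'b) \<Rightarrow> ('a \<Rightarrow> 'b) \<Rightarrow> ennreal" where
  "dmap dX dY F1 F2 =
     max (SUP x\<in>UNIV - {0}. ennreal (dY (F1 x) (F2 x) / dX x 0)) (ennreal (dY (F1 0) (F2 0)))"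

definition Bd ::
  "('a::zero \<Rightarrow> 'a \<Rightarrow> real) \<Rightarrow> ('b::zero \<Rightarrow> 'b \<Rightarrow> real) \<Rightarrow> ('a \<Rightarrow> 'b) set" where
  "Bd dX dY = {F. dmap dX dY F (\<lambda>_. 0) < \<infinity>}"

definition is_norm :: "('k::real_normed_field \<Rightarrow> 'a::ab_group_add \<Rightarrow> 'a) \<Rightarrow> ('a \<Rightarrow> real) \<Rightarrow> bool" where
  "is_norm s n \<longleftrightarrow> (\<forall>y. n y = 0 \<longleftrightarrow> y = 0) \<and> (\<forall>u v. n (u + v) \<le> n u + n v) \<and>
     (\<forall>a y. n (s a y) = norm a * n y)"

end

theory Submission
  imports Defs
begin

lemma dmap_le_iff:
  "dmap dX dY F G \<le> B \<longleftrightarrow> (\<forall>x\<in>UNIV - {0}. ennreal (dY (F x) (G x) / dX x 0) \<le> B) \<and> ennreal (dY (F 0) (G 0)) \<le> B"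
  unfolding dmap_def by (simp add: SUP_le_iff)

lemma dmap_ge1:
  "x \<noteq> 0 \<Longrightarrow> ennreal (dY (F x) (G x) / dX x 0) \<le> dmap dX dY F G"
  unfolding dmap_def by (rule order.trans[OF SUP_upper max.cobounded1]) auto

lemma dmap_ge2: "ennreal (dY (F 0) (G 0)) \<le> dmap dX dY F G"
  unfolding dmap_def by simp

lemma dX_pos:
  fixes dX :: "'a::zero \<Rightarrow> 'a \<Rightarrow> real"
  assumes "Metric_space UNIV dX" "x \<noteq> 0" shows "dX x 0 > 0"
proof -
  interpret Metric_space UNIV dX by fact
  show ?thesis using assms(2) nonneg[of x 0] zero[of x 0] by force
qed

lemma dmap_commute:
  assumes "Metric_space UNIV dY" shows "dmap dX dY F G = dmap dX dY G F"
proof -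
  interpret Metric_space UNIV dY by fact
  show ?thesis unfolding dmap_def by (simp add: commute)
qed

lemma dmap_tri:
  fixes dX :: "'a::zero \<Rightarrow> 'a \<Rightarrow> real"
  assumes X: "Metric_space UNIV dX" and Y: "Metric_space UNIV dY"
  shows "dmap dX dY F H \<le> dmap dX dY F G + dmap dX dY G H"
proof -
  interpret Y: Metric_space UNIV dY by fact
  show ?thesis unfolding dmap_le_iff
  proof (intro conjI ballI)
    fix x :: 'a assume "x \<in> UNIV - {0}"
    hence x: "x \<noteq> 0" by auto
    have p: "dX x 0 > 0" using dX_pos[OF X x] .
    have "dY (F x) (H x) / dX x 0 \<le> (dY (F x) (G x) + dY (G x) (H x)) / dX x 0"
      using Y.triangle[of "F x" "G x" "H x"] p by (intro divide_right_mono) auto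
    also have "\<dots> = dY (F x) (G x) / dX x 0 + dY (G x) (H x) / dX x 0"
      by (rule add_divide_distrib)
    finally have "ennreal (dY (F x) (H x) / dX x 0) \<le> ennreal (dY (F x) (G x) / dX x 0 + dY (G x) (H x) / dX x 0)"
      by (rule ennreal_leI)
    also have "\<dots> = ennreal (dY (F x) (G x) / dX x 0) + ennreal (dY (G x) (H x) / dX x 0)"
      using p by (intro ennreal_plus) auto
    also have "\<dots> \<le> dmap dX dY F G + dmap dX dY G H"
      using dmap_ge1[OF x] by (intro add_mono) auto
    finally show "ennreal (dY (F x) (H x) / dX x 0) \<le> dmap dX dY F G + dmap dX dY G H" .
  next
    have "ennreal (dY (F 0) (H 0)) \<le> ennreal (dY (F 0) (G 0) + dY (G 0) (H 0))"
      using Y.triangle[of "F 0" "G 0" "H 0"] by (intro ennreal_leI) auto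
    also have "\<dots> = ennreal (dY (F 0) (G 0)) + ennreal (dY (G 0) (H 0))"
      by (intro ennreal_plus) auto
    also have "\<dots> \<le> dmap dX dY F G + dmap dX dY G H"
      using dmap_ge2 by (intro add_mono) auto
    finally show "ennreal (dY (F 0) (H 0)) \<le> dmap dX dY F G + dmap dX dY G H" .
  qed
qed

lemma dmap_zero_iff:
  fixes dX :: "'a::zero \<Rightarrow> 'a \<Rightarrow> real"
  assumes X: "Metric_space UNIV dX" and Y: "Metric_space UNIV dY"
  shows "dmap dX dY F G = 0 \<longleftrightarrow> F = G"
proof
  interpret Y: Metric_space UNIV dY by fact
  assume h: "dmap dX dY F G = 0"
  show "F = G"
  proof
    fix x
    show "F x = G x"
    proof (cases "x = 0")
      case True
      have "ennreal (dY (F 0) (G 0)) \<le> 0" using dmap_ge2[of dY F G dX] h by simp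
      then show ?thesis using True by (simp add: order.antisym)
    next
      case False
      have p: "dX x 0 > 0" using dX_pos[OF X False] .
      have "ennreal (dY (F x) (G x) / dX x 0) \<le> 0" using dmap_ge1[OF False, of dY F G dX] h by simp
      hence "dY (F x) (G x) / dX x 0 \<le> 0" by (simp add: ennreal_eq_0_iff)
      hence "dY (F x) (G x) \<le> 0" using p by (simp add: divide_le_0_iff)
      then show ?thesis using Y.nonneg[of "F x" "G x"] by (simp add: order.antisym)
    qed
  qed
next
  interpret Y: Metric_space UNIV dY by fact
  assume "F = G"
  hence "dmap dX dY F G \<le> 0" unfolding dmap_le_iff by simp
  thus "dmap dX dY F G = 0" by simp
qed

lemma dmap_transl:
  assumes "translation_invariant dY"
  shows "dmap dX dY (F + H) (G + H) = dmap dX dY F G"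
  using assms unfolding dmap_def translation_invariant_def by simp

lemma dmap_scale_le:
  fixes dX :: "'a::zero \<Rightarrow> 'a \<Rightarrow> real"
  assumes X: "Metric_space UNIV dX" and C: "C > 0" and h: "\<And>y. dY (s y) 0 \<le> C * dY y 0"
  shows "dmap dX dY (\<lambda>x. s (F x)) (\<lambda>_. 0) \<le> ennreal C * dmap dX dY F (\<lambda>_. 0)"
  unfolding dmap_le_iff
proof (intro conjI ballI)
  fix x :: 'a assume "x \<in> UNIV - {0}"
  hence x: "x \<noteq> 0" by auto
  have p: "dX x 0 > 0" using dX_pos[OF X x] .
  have "dY (s (F x)) 0 / dX x 0 \<le> C * (dY (F x) 0 / dX x 0)"
    using h[of "F x"] p by (simp add: divide_right_mono)
  hence "ennreal (dY (s (F x)) 0 / dX x 0) \<le> ennreal (C * (dY (F x) 0 / dX x 0))"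
    by (rule ennreal_leI)
  also have "\<dots> = ennreal C * ennreal (dY (F x) 0 / dX x 0)"
    using C by (metis ennreal_mult' less_imp_le)
  also have "\<dots> \<le> ennreal C * dmap dX dY F (\<lambda>_. 0)"
    using dmap_ge1[OF x, of dY F "\<lambda>_. 0" dX] by (intro mult_left_mono) auto
  finally show "ennreal (dY (s (F x)) 0 / dX x 0) \<le> ennreal C * dmap dX dY F (\<lambda>_. 0)" .
next
  have "ennreal (dY (s (F 0)) 0) \<le> ennreal (C * dY (F 0) 0)" using h by (rule ennreal_leI)
  also have "\<dots> = ennreal C * ennreal (dY (F 0) 0)" using C by (simp add: ennreal_mult')
  also have "\<dots> \<le> ennreal C * dmap dX dY F (\<lambda>_. 0)"
    using dmap_ge2[of dY F "\<lambda>_. 0" dX] by (intro mult_left_mono) auto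
  finally show "ennreal (dY (s (F 0)) ((\<lambda>_. 0) 0)) \<le> ennreal C * dmap dX dY F (\<lambda>_. 0)" by simp
qed

lemma max_mult_ennreal: "max (c * A) (c * B) = (c::ennreal) * max A B"
  by (cases "A \<le> B") (auto simp: max_def mult_left_mono intro: order.antisym)

lemma dmap_norm_scale:
  assumes N: "is_norm sY nY" and X: "Metric_space UNIV dX"
  shows "dmap dX (\<lambda>u v. nY (u - v)) (\<lambda>x. sY a (F x)) 0
         = ennreal (norm a) * dmap dX (\<lambda>u v. nY (u - v)) F 0"
proof -
  have ns: "nY (sY a y) = norm a * nY y" for y using N unfolding is_norm_def by blast
  have e: "ennreal (nY (sY a (F x)) / dX x 0) = ennreal (norm a) * ennreal (nY (F x) / dX x 0)" for x
    by (metis ns norm_ge_zero ennreal_mult' times_divide_eq_right)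
  have e0: "ennreal (nY (sY a (F 0))) = ennreal (norm a) * ennreal (nY (F 0))"
    by (simp add: ns ennreal_mult')
  show ?thesis unfolding dmap_def
    by (simp add: e e0 SUP_mult_left_ennreal[symmetric] max_mult_ennreal)
qed

theorem theorem10:
  fixes sX :: "'k::real_normed_field \<Rightarrow> 'a::ab_group_add \<Rightarrow> 'a"
    and sY :: "'k \<Rightarrow> 'b::ab_group_add \<Rightarrow> 'b"
    and dX :: "'a \<Rightarrow> 'a \<Rightarrow> real" and dY :: "'b \<Rightarrow> 'b \<Rightarrow> real"
  assumes "metrizable_vs sX dX" and "metrizable_vs sY dY"
    and "translation_invariant dY" and "scale_bounded sY dY"
  shows "module.subspace (\<lambda>a F x. sY a (F x)) (Bd dX dY)
    \<and> (\<forall>F\<in>Bd dX dY. \<forall>G\<in>Bd dX dY. dmap dX dY F G < \<infinity>)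
    \<and> Metric_space (Bd dX dY) (\<lambda>F G. enn2real (dmap dX dY F G))
    \<and> (\<forall>F\<in>Bd dX dY. \<forall>G\<in>Bd dX dY. \<forall>H\<in>Bd dX dY.
         dmap dX dY (F + H) (G + H) = dmap dX dY F G)
    \<and> (\<forall>nY. is_norm sY nY \<and> dY = (\<lambda>u v. nY (u - v)) \<longrightarrow>
         (\<forall>F\<in>Bd dX dY. enn2real (dmap dX dY F 0) = 0 \<longleftrightarrow> F = 0)
       \<and> (\<forall>F\<in>Bd dX dY. \<forall>G\<in>Bd dX dY.
            enn2real (dmap dX dY (F + G) 0) \<le> enn2real (dmap dX dY F 0) + enn2real (dmap dX dY G 0))
       \<and> (\<forall>F\<in>Bd dX dY. \<forall>a.
            enn2real (dmap dX dY (\<lambda>x. sY a (F x)) 0) = norm a * enn2real (dmap dX dY F 0)))"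
proof -
  have X: "Metric_space UNIV dX" using assms(1) unfolding metrizable_vs_def by blast
  have Y: "Metric_space UNIV dY" using assms(2) unfolding metrizable_vs_def by blast
  have TI: "translation_invariant dY" by fact
  have z: "(0::'a\<Rightarrow>'b) = (\<lambda>_. 0)" by (simp add: zero_fun_def)
  have Bd_iff: "F \<in> Bd dX dY \<longleftrightarrow> dmap dX dY F 0 < \<infinity>" for F
    by (simp add: Bd_def z)
  have fin: "dmap dX dY F G < \<infinity>" if "F \<in> Bd dX dY" "G \<in> Bd dX dY" for F G
  proof -
    have "dmap dX dY F G \<le> dmap dX dY F 0 + dmap dX dY 0 G" by (rule dmap_tri[OF X Y])
    also have "dmap dX dY 0 G = dmap dX dY G 0" by (rule dmap_commute[OF Y])
    finally show ?thesis using that by (simp add: Bd_iff z order.strict_trans1 ennreal_add_less_top)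
  qed
  have addB: "F + G \<in> Bd dX dY" if "F \<in> Bd dX dY" "G \<in> Bd dX dY" for F G
  proof -
    have e: "dmap dX dY (F + G) (0 + G) = dmap dX dY F 0" by (rule dmap_transl[OF TI])
    have "dmap dX dY (F + G) 0 \<le> dmap dX dY F 0 + dmap dX dY (0 + G) 0"
      using dmap_tri[OF X Y, of "F + G" 0 "0 + G"] by (simp only: e)
    hence "dmap dX dY (F + G) 0 \<le> dmap dX dY F 0 + dmap dX dY G 0" by (simp only: add_0_left)
    moreover have "dmap dX dY F 0 + dmap dX dY G 0 < \<infinity>"
      using that by (simp add: Bd_iff ennreal_add_less_top)
    ultimately show ?thesis by (rule Bd_iff[THEN iffD2, OF order.strict_trans1])
  qed
  have scB: "(\<lambda>x. sY a (F x)) \<in> Bd dX dY" if "F \<in> Bd dX dY" for F a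
  proof -
    obtain C where C: "C > 0" "\<And>y. dY (sY a y) 0 \<le> C * dY y 0"
      using assms(4) unfolding scale_bounded_def by blast
    have "dmap dX dY (\<lambda>x. sY a (F x)) (\<lambda>_. 0) \<le> ennreal C * dmap dX dY F (\<lambda>_. 0)"
      by (rule dmap_scale_le[where s="sY a" and dY=dY, OF X C(1) C(2)])
    moreover have "ennreal C * dmap dX dY F (\<lambda>_. 0) < \<infinity>"
      using that by (simp add: Bd_iff z ennreal_mult_less_top)
    ultimately have "dmap dX dY (\<lambda>x. sY a (F x)) (\<lambda>_. 0) < \<infinity>" by (rule order.strict_trans1)
    thus ?thesis by (simp add: Bd_iff z)
  qed
  have zB: "0 \<in> Bd dX dY"
    unfolding Bd_iff using dmap_zero_iff[OF X Y, of 0 0] by simp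
  have MY: "module sY" using assms(2) unfolding metrizable_vs_def vector_space_def module_def by blast
  have MF: "module (\<lambda>a (F::'a \<Rightarrow> 'b) x. sY a (F x))"
  proof
    fix a b :: 'k and F G :: "'a \<Rightarrow> 'b"
    show "(\<lambda>x. sY a ((F + G) x)) = (\<lambda>x. sY a (F x)) + (\<lambda>x. sY a (G x))"
      by (simp add: fun_eq_iff module.scale_right_distrib[OF MY])
    show "(\<lambda>x. sY (a + b) (F x)) = (\<lambda>x. sY a (F x)) + (\<lambda>x. sY b (F x))"
      by (simp add: fun_eq_iff module.scale_left_distrib[OF MY])
    show "(\<lambda>x. sY a (sY b (F x))) = (\<lambda>x. sY (a * b) (F x))"
      by (simp add: fun_eq_iff module.scale_scale[OF MY])
    show "(\<lambda>x. sY 1 (F x)) = F"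
      by (simp add: fun_eq_iff module.scale_one[OF MY])
  qed
  have P1: "module.subspace (\<lambda>a F x. sY a (F x)) (Bd dX dY)"
    unfolding module.subspace_def[OF MF] by (intro conjI ballI allI zB addB scB)
  have P3: "Metric_space (Bd dX dY) (\<lambda>F G. enn2real (dmap dX dY F G))"
  proof
    fix F G show "0 \<le> enn2real (dmap dX dY F G)" by simp
    show "enn2real (dmap dX dY F G) = enn2real (dmap dX dY G F)"
      by (simp add: dmap_commute[OF Y])
  next
    fix F G assume "F \<in> Bd dX dY" "G \<in> Bd dX dY"
    then have "dmap dX dY F G < \<infinity>" by (rule fin)
    then show "(enn2real (dmap dX dY F G) = 0) = (F = G)"
      using dmap_zero_iff[OF X Y, of F G] by (auto simp: enn2real_eq_0_iff)
  next
    fix F G H assume h: "F \<in> Bd dX dY" "G \<in> Bd dX dY" "H \<in> Bd dX dY"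
    have "enn2real (dmap dX dY F H) \<le> enn2real (dmap dX dY F G + dmap dX dY G H)"
      using fin[OF h(1) h(2)] fin[OF h(2) h(3)] dmap_tri[OF X Y, of F H G]
      by (intro enn2real_mono) (auto simp: ennreal_add_less_top)
    also have "\<dots> = enn2real (dmap dX dY F G) + enn2real (dmap dX dY G H)"
      using fin[OF h(1) h(2)] fin[OF h(2) h(3)] by (simp add: enn2real_plus)
    finally show "enn2real (dmap dX dY F H) \<le> enn2real (dmap dX dY F G) + enn2real (dmap dX dY G H)" .
  qed
  have P5: "(\<forall>F\<in>Bd dX dY. enn2real (dmap dX dY F 0) = 0 \<longleftrightarrow> F = 0)
       \<and> (\<forall>F\<in>Bd dX dY. \<forall>G\<in>Bd dX dY.
            enn2real (dmap dX dY (F + G) 0) \<le> enn2real (dmap dX dY F 0) + enn2real (dmap dX dY G 0))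
       \<and> (\<forall>F\<in>Bd dX dY. \<forall>a.
            enn2real (dmap dX dY (\<lambda>x. sY a (F x)) 0) = norm a * enn2real (dmap dX dY F 0))"
    if N: "is_norm sY nY" and dY: "dY = (\<lambda>u v. nY (u - v))" for nY
  proof (intro conjI ballI allI)
    fix F assume "F \<in> Bd dX dY"
    then show "enn2real (dmap dX dY F 0) = 0 \<longleftrightarrow> F = 0"
      using Metric_space.zero[OF P3, of F 0] zB by simp
  next
    fix F G assume h: "F \<in> Bd dX dY" "G \<in> Bd dX dY"
    have "enn2real (dmap dX dY (F + G) 0) \<le> enn2real (dmap dX dY (F + G) (0 + G)) + enn2real (dmap dX dY (0 + G) 0)"
      using Metric_space.triangle[OF P3, of "F + G" "0 + G" 0] addB h zB by simp
    also have "dmap dX dY (F + G) (0 + G) = dmap dX dY F 0" by (rule dmap_transl[OF TI])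
    finally show "enn2real (dmap dX dY (F + G) 0) \<le> enn2real (dmap dX dY F 0) + enn2real (dmap dX dY G 0)"
      by (simp only: add_0_left)
  next
    fix F a assume "F \<in> Bd dX dY"
    show "enn2real (dmap dX dY (\<lambda>x. sY a (F x)) 0) = norm a * enn2real (dmap dX dY F 0)"
      unfolding dY dmap_norm_scale[OF N X] by (simp add: enn2real_mult)
  qed
  have P2: "\<forall>F\<in>Bd dX dY. \<forall>G\<in>Bd dX dY. dmap dX dY F G < \<infinity>" using fin by blast
  have P4: "\<forall>F\<in>Bd dX dY. \<forall>G\<in>Bd dX dY. \<forall>H\<in>Bd dX dY.
         dmap dX dY (F + H) (G + H) = dmap dX dY F G" using dmap_transl[OF TI] by blast
  have P5': "\<forall>nY. is_norm sY nY \<and> dY = (\<lambda>u v. nY (u - v)) \<longrightarrow>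
         (\<forall>F\<in>Bd dX dY. enn2real (dmap dX dY F 0) = 0 \<longleftrightarrow> F = 0)
       \<and> (\<forall>F\<in>Bd dX dY. \<forall>G\<in>Bd dX dY.
            enn2real (dmap dX dY (F + G) 0) \<le> enn2real (dmap dX dY F 0) + enn2real (dmap dX dY G 0))
       \<and> (\<forall>F\<in>Bd dX dY. \<forall>a.
            enn2real (dmap dX dY (\<lambda>x. sY a (F x)) 0) = norm a * enn2real (dmap dX dY F 0))"
  proof (intro allI impI)
    fix nY assume h: "is_norm sY nY \<and> dY = (\<lambda>u v. nY (u - v))"
    show "(\<forall>F\<in>Bd dX dY. enn2real (dmap dX dY F 0) = 0 \<longleftrightarrow> F = 0)
       \<and> (\<forall>F\<in>Bd dX dY. \<forall>G\<in>Bd dX dY.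
            enn2real (dmap dX dY (F + G) 0) \<le> enn2real (dmap dX dY F 0) + enn2real (dmap dX dY G 0))
       \<and> (\<forall>F\<in>Bd dX dY. \<forall>a.
            enn2real (dmap dX dY (\<lambda>x. sY a (F x)) 0) = norm a * enn2real (dmap dX dY F 0))"
      by (rule P5[OF conjunct1[OF h] conjunct2[OF h]])
  qed
  show ?thesis by (rule conjI[OF P1 conjI[OF P2 conjI[OF P3 conjI[OF P4 P5']]]])
qed

end
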